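(* Under the standing assumptions, $A$ (resp. $A^*$) acts diagonalizably on $V$ with eigenvalues $\theta_0,\dots,\theta_d$ (resp. $\theta^*_0,\dots,\theta^*_d$), and for $0\le i\le d$ the eigenspace of $A$ for $\theta_i$ (resp. of $A^*$ for $\theta^*_i$) has dimension $\binom{d}{i}$.
   Context: Let $\mathbb F$ be an algebraically closed field, $d\ge0$, and $q,a,b,c,a^*,b^*,c^*\in\mathbb F$ with $q,b,c,b^*,c^*$ nonzero and $q^2\ne\pm1$. Put $\theta_i=a+bq^{2i-d}+cq^{d-2i}$ and $\theta^*_i=a^*+b^*q^{2i-d}+c^*q^{d-2i}$ ($0\le i\le d$), and assume $\theta_0,\dots,\theta_d$ are mutually distinct and $\theta^*_0,\dots,\theta^*_d$ are mutually distinct (this forces $q^{2i}\ne1$ for $1\le i\le d$). $U_q(\widehat{\mathfrak{sl}}_2)$ is the associative unital $\mathbb F$-algebra with generators $e_i^{\pm},K_i^{\pm1}$ ($i\in\{0,1\}$) and relations $K_iK_i^{-1}=K_i^{-1}K_i=1$, $K_0K_1=K_1K_0$, $K_ie_i^{\pm}K_i^{-1}=q^{\pm2}e_i^{\pm}$, $K_ie_j^{\pm}K_i^{-1}=q^{\mp2}e_j^{\pm}$ ($i\ne j$), $e_i^+e_i^--e_i^-e_i^+=(K_i-K_i^{-1})/(q-q^{-1})$, $e_0^{\pm}e_1^{\mp}=e_1^{\mp}e_0^{\pm}$, and the $q$-Serre relations $(e_i^\pm)^3e_j^\pm-[3]_q(e_i^\pm)^2e_j^\pm e_i^\pm+[3]_qe_i^\pm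 e_j^\pm(e_i^\pm)^2-e_j^\pm(e_i^\pm)^3=0$ ($i\ne j$), where $[3]_q=q^2+1+q^{-2}$. Tensor products of modules are formed via $e_i^+(v\otimes w)=e_i^+v\otimes K_iw+v\otimes e_i^+w$, $e_i^-(v\otimes w)=e_i^-v\otimes w+K_i^{-1}v\otimes e_i^-w$, $K_i(v\otimes w)=K_iv\otimes K_iw$. For nonzero $\alpha\in\mathbb F$, $V(\alpha)$ is the module with basis $x,y$ and $K_1x=qx$, $K_1y=q^{-1}y$, $e_1^-x=y$, $e_1^-y=0$, $e_1^+x=0$, $e_1^+y=x$, $K_0x=q^{-1}x$, $K_0y=qy$, $e_0^-x=0$, $e_0^-y=q\alpha^{-1}x$, $e_0^+x=q^{-1}\alpha y$, $e_0^+y=0$. $V=V(\alpha_1)\otimes\cdots\otimes V(\alpha_d)$ with nonzero $\alpha_i\in\mathbb F$ (for $d=0$, the trivial module where each $e_i^\pm$ acts as $0$ and each $K_i^{\pm1}$ as $1$). Fix $u,v,u^*,v^*\in\mathbb F$ with $uv^*=-bb^*q^{-1}(q-q^{-1})^2$, $vu^*=-cc^*q^{-1}(q-q^{-1})^2$; set $R=ue_0^++ve_1^-K_1$, $L=u^*e_1^++v^*e_0^-K_0$, $A=a1+bK_0+cK_1+R$, $A^*=a^*1+b^*K_0+c^*K_1+L$. *)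

theory Defs
  imports "Jordan_Normal_Form.Jordan_Normal_Form_Uniqueness"
begin

text \<open>Generators of U_q(affine sl2): e_0^+, e_0^-, e_1^+, e_1^-, K_0, K_1, K_0^{-1}, K_1^{-1}.\<close>
datatype gen = E0p | E0m | E1p | E1m | K0 | K1 | K0inv | K1inv

text \<open>Kronecker (tensor) product of matrices; index (i1,i2) of the product basis is
  i1 * (dim of second factor) + i2.\<close>
definition kron :: "'a :: semiring_1 mat \<Rightarrow> 'a mat \<Rightarrow> 'a mat" where
  "kron M N = mat (dim_row M * dim_row N) (dim_col M * dim_col N)
     (\<lambda>(i,j). M $$ (i div dim_row N, j div dim_col N) * N $$ (i mod dim_row N, j mod dim_col N))"

text \<open>Action of the generators on the evaluation module V(alpha), basis x (index 0), y (index 1).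
  The matrix entry (i,j) is the coefficient of basis vector i in the image of basis vector j.\<close>
definition evalV :: "'a :: field \<Rightarrow> 'a \<Rightarrow> gen \<Rightarrow> 'a mat" where
  "evalV q \<alpha> g = mat 2 2 (\<lambda>(i,j). case g of
      K1 \<Rightarrow> (if i = j then (if i = 0 then q else inverse q) else 0)
    | K1inv \<Rightarrow> (if i = j then (if i = 0 then inverse q else q) else 0)
    | K0 \<Rightarrow> (if i = j then (if i = 0 then inverse q else q) else 0)
    | K0inv \<Rightarrow> (if i = j then (if i = 0 then q else inverse q) else 0)
    | E1m \<Rightarrow> (if i = 1 \<and> j = 0 then 1 else 0)
    | E1p \<Rightarrow> (if i = 0 \<and> j = 1 then 1 else 0)
    | E0m \<Rightarrow> (if i = 0 \<and> j = 1 then q * inverse \<alpha> else 0)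
    | E0p \<Rightarrow> (if i = 1 \<and> j = 0 then inverse q * \<alpha> else 0))"

definition Kof :: "gen \<Rightarrow> gen" where
  "Kof g = (case g of E0p \<Rightarrow> K0 | E0m \<Rightarrow> K0 | E1p \<Rightarrow> K1 | E1m \<Rightarrow> K1 | _ \<Rightarrow> g)"

definition Kinvof :: "gen \<Rightarrow> gen" where
  "Kinvof g = (case g of E0p \<Rightarrow> K0inv | E0m \<Rightarrow> K0inv | E1p \<Rightarrow> K1inv | E1m \<Rightarrow> K1inv | _ \<Rightarrow> g)"

text \<open>Action of generators on V(alpha_1) \<otimes> ... \<otimes> V(alpha_d), built as
  V(alpha_1) \<otimes> (V(alpha_2) \<otimes> ... ) via the given coproduct.\<close>
fun tens :: "'a :: field \<Rightarrow> 'a list \<Rightarrow> gen \<Rightarrow> 'a mat" where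
  "tens q [] g = (case g of E0p \<Rightarrow> 0\<^sub>m 1 1 | E0m \<Rightarrow> 0\<^sub>m 1 1 | E1p \<Rightarrow> 0\<^sub>m 1 1 | E1m \<Rightarrow> 0\<^sub>m 1 1
                   | _ \<Rightarrow> 1\<^sub>m 1)"
| "tens q (\<alpha> # as) g = (case g of
      E0p \<Rightarrow> kron (evalV q \<alpha> E0p) (tens q as K0) + kron (1\<^sub>m 2) (tens q as E0p)
    | E1p \<Rightarrow> kron (evalV q \<alpha> E1p) (tens q as K1) + kron (1\<^sub>m 2) (tens q as E1p)
    | E0m \<Rightarrow> kron (evalV q \<alpha> E0m) (1\<^sub>m (2 ^ length as)) + kron (evalV q \<alpha> K0inv) (tens q as E0m)
    | E1m \<Rightarrow> kron (evalV q \<alpha> E1m) (1\<^sub>m (2 ^ length as)) + kron (evalV q \<alpha> K1inv) (tens q as E1m)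
    | _ \<Rightarrow> kron (evalV q \<alpha> g) (tens q as g))"

definition theta :: "'a :: field \<Rightarrow> 'a \<Rightarrow> 'a \<Rightarrow> 'a \<Rightarrow> nat \<Rightarrow> nat \<Rightarrow> 'a" where
  "theta a b c q d i = a + b * q powi (2 * int i - int d) + c * q powi (int d - 2 * int i)"

definition opA :: "'a :: field \<Rightarrow> 'a list \<Rightarrow> 'a \<Rightarrow> 'a \<Rightarrow> 'a \<Rightarrow> 'a \<Rightarrow> 'a \<Rightarrow> 'a mat" where
  "opA q as a b c u v = a \<cdot>\<^sub>m 1\<^sub>m (2 ^ length as) + b \<cdot>\<^sub>m tens q as K0 + c \<cdot>\<^sub>m tens q as K1
     + u \<cdot>\<^sub>m tens q as E0p + v \<cdot>\<^sub>m (tens q as E1m * tens q as K1)"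

definition opAs :: "'a :: field \<Rightarrow> 'a list \<Rightarrow> 'a \<Rightarrow> 'a \<Rightarrow> 'a \<Rightarrow> 'a \<Rightarrow> 'a \<Rightarrow> 'a mat" where
  "opAs q as as' bs cs us vs = as' \<cdot>\<^sub>m 1\<^sub>m (2 ^ length as) + bs \<cdot>\<^sub>m tens q as K0 + cs \<cdot>\<^sub>m tens q as K1
     + us \<cdot>\<^sub>m tens q as E1p + vs \<cdot>\<^sub>m (tens q as E0m * tens q as K0)"

definition alg_closed_field :: "'a :: field itself \<Rightarrow> bool" where
  "alg_closed_field _ = (\<forall>p :: 'a poly. degree p > 0 \<longrightarrow> (\<exists>x. poly p x = 0))"

end

theory Submission
  imports Defs "Jordan_Normal_Form.Jordan_Normal_Form_Existence"
begin

lemma ex_min_wt: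
  fixes u :: "'a::field vec" and wt :: "nat \<Rightarrow> nat"
  assumes "u \<in> carrier_vec n" "u \<noteq> 0\<^sub>v n"
  shows "\<exists>i<n. u $ i \<noteq> 0 \<and> (\<forall>j<n. u $ j \<noteq> 0 \<longrightarrow> wt i \<le> wt j)"
proof -
  have "\<exists>i<n. u $ i \<noteq> 0"
  proof (rule ccontr)
    assume "\<not> ?thesis"
    hence "u = 0\<^sub>v n" using assms(1) by (intro eq_vecI) auto
    thus False using assms(2) by simp
  qed
  then obtain i0 where "i0 < n \<and> u $ i0 \<noteq> 0" by blast
  from ex_has_least_nat[of "\<lambda>i. i < n \<and> u $ i \<noteq> 0", OF this, of wt] show ?thesis by blast
qed

lemma sum_list_eq_le:
  fixes f g :: "'b \<Rightarrow> nat"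
  assumes "\<forall>x\<in>set L. g x \<le> f x" "sum_list (map f L) = sum_list (map g L)" "x \<in> set L"
  shows "f x = g x"
  using assms
proof (induct L)
  case (Cons a L)
  have "sum_list (map g L) \<le> sum_list (map f L)"
    using Cons(2) by (intro sum_list_mono) auto
  with Cons(2,3) have "f a = g a" "sum_list (map f L) = sum_list (map g L)" by auto
  with Cons show ?case by auto
qed simp

lemma jm_diag: "\<forall>(s,e)\<in>set n_as. s = 1 \<Longrightarrow> diagonal_mat (jordan_matrix n_as)"
proof (induct n_as)
  case Nil
  show ?case by (simp add: diagonal_mat_def)
next
  case (Cons ne rest)
  obtain e where ne: "ne = (1,e)" using Cons(2) by (cases ne) auto
  let ?r = "sum_list (map fst rest)"
  have JM: "jordan_matrix rest \<in> carrier_mat ?r ?r" by simp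
  hence id: "jordan_matrix (ne # rest) = four_block_mat (jordan_block 1 e) (0\<^sub>m 1 ?r) (0\<^sub>m ?r 1) (jordan_matrix rest)"
    unfolding ne jordan_matrix_def by (simp add: Let_def)
  have IH: "diagonal_mat (jordan_matrix rest)" using Cons by auto
  show ?case unfolding id diagonal_mat_def
  proof (intro allI impI)
    fix i j assume i: "i < dim_row (four_block_mat (jordan_block 1 e) (0\<^sub>m 1 ?r) (0\<^sub>m ?r 1) (jordan_matrix rest))"
      and j: "j < dim_col (four_block_mat (jordan_block 1 e) (0\<^sub>m 1 ?r) (0\<^sub>m ?r 1) (jordan_matrix rest))"
      and ij: "i \<noteq> j"
    from i j have i': "i < 1 + ?r" and j': "j < 1 + ?r" by auto
    show "four_block_mat (jordan_block 1 e) (0\<^sub>m 1 ?r) (0\<^sub>m ?r 1) (jordan_matrix rest) $$ (i, j) = 0"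
      using i' j' ij IH JM unfolding diagonal_mat_def by auto
  qed
qed

lemma order_prod_lin:
  fixes x :: "'a::field"
  shows "Polynomial.order x (\<Prod>a\<leftarrow>xs. [:-a,1:]) = length (filter ((=) x) xs)"
proof (induct xs)
  case Nil
  show ?case by (simp add: order_0I)
next
  case (Cons a xs)
  have nz: "(\<Prod>a\<leftarrow>xs. [:-a,1:]) \<noteq> (0::'a poly)"
    by (auto simp: prod_list_zero_iff)
  have "Polynomial.order x (\<Prod>a\<leftarrow>a#xs. [:-a,1:]) = Polynomial.order x [:-a,1:] + Polynomial.order x (\<Prod>a\<leftarrow>xs. [:-a,1:])"
  proof -
    have e: "(\<Prod>a\<leftarrow>a#xs. [:-a,1:]) = [:-a,1:] * (\<Prod>a\<leftarrow>xs. [:-a,1:])" by simp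
    have "[:-a,1:] * (\<Prod>a\<leftarrow>xs. [:-a,1:]) \<noteq> 0" by (rule no_zero_divisors) (use nz in auto)
    from order_mult[OF this, of x] show ?thesis unfolding e .
  qed
  moreover have "Polynomial.order x [:-a,1:] = (if x = a then 1 else 0)"
  proof (cases "x = a")
    case True thus ?thesis using order_power_n_n[of a 1] by simp
  next
    case False thus ?thesis by (simp add: order_0I)
  qed
  ultimately show ?case using Cons by simp
qed

lemma prod_one: "\<forall>(s,e)\<in>set L. s = 1 \<Longrightarrow> (\<Prod>(s,e)\<leftarrow>L. [:-e,1:]^s) = (\<Prod>e\<leftarrow>map snd L. [:-(e::'a::field),1:])"
  by (induct L) auto
lemma sum_one: "\<forall>(s,e)\<in>set L. s = (1::nat) \<Longrightarrow> sum_list (map (min 1) (map fst (filter (\<lambda>(n,e). e = ev) L))) = length (filter ((=) ev) (map snd L))"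
  by (induct L) auto

locale wtri =
  fixes M :: "'a::field mat" and n d :: nat and wt :: "nat \<Rightarrow> nat" and f :: "nat \<Rightarrow> 'a"
  assumes M: "M \<in> carrier_mat n n"
  and ut: "upper_triangular M"
  and wt_le: "\<And>i. i < n \<Longrightarrow> wt i \<le> d"
  and finj: "inj_on f {0..d}"
  and diag: "\<And>i. i < n \<Longrightarrow> M $$ (i,i) = f (wt i)"
  and pat: "\<And>i j. i < n \<Longrightarrow> j < n \<Longrightarrow> M $$ (i,j) \<noteq> 0 \<Longrightarrow> i \<noteq> j \<Longrightarrow> wt j < wt i"
begin

lemma cm_idx: "i < n \<Longrightarrow> j < n \<Longrightarrow> char_matrix M e $$ (i,j) = M $$ (i,j) - (if i = j then e else 0)"
  using M by (auto simp: char_matrix_def)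

lemma K1:
  assumes x: "x \<in> carrier_vec n" and i: "i < n" and z: "\<And>j. j < n \<Longrightarrow> wt j < wt i \<Longrightarrow> x $ j = 0"
  shows "(char_matrix M e *\<^sub>v x) $ i = (f (wt i) - e) * x $ i"
proof -
  have cM: "char_matrix M e \<in> carrier_mat n n" using M by simp
  have "(char_matrix M e *\<^sub>v x) $ i = (\<Sum>j\<in>{0..<n}. char_matrix M e $$ (i,j) * x $ j)"
    using cM x i by (simp add: scalar_prod_def)
  also have "\<dots> = (\<Sum>j\<in>{0..<n}. if j = i then (f (wt i) - e) * x $ i else 0)"
  proof (rule sum.cong[OF refl])
    fix j assume j: "j \<in> {0..<n}"
    show "char_matrix M e $$ (i,j) * x $ j = (if j = i then (f (wt i) - e) * x $ i else 0)"
    proof (cases "j = i")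
      case True thus ?thesis using i by (simp add: cm_idx diag)
    next
      case False
      show ?thesis
      proof (cases "M $$ (i,j) = 0")
        case True thus ?thesis using False i j by (simp add: cm_idx)
      next
        case nz: False
        have "wt j < wt i" using pat[OF i _ nz] j False by auto
        thus ?thesis using z j False by auto
      qed
    qed
  qed
  also have "\<dots> = (f (wt i) - e) * x $ i" using i by simp
  finally show ?thesis .
qed

lemma ker2:
  assumes v: "v \<in> carrier_vec n" and h: "char_matrix M e *\<^sub>v (char_matrix M e *\<^sub>v v) = 0\<^sub>v n"
  shows "char_matrix M e *\<^sub>v v = 0\<^sub>v n"
proof (rule ccontr)
  let ?N = "char_matrix M e"
  define u where "u = ?N *\<^sub>v v"
  have cM: "?N \<in> carrier_mat n n" using M by simp
  have u: "u \<in> carrier_vec n" unfolding u_def using cM v by simp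
  assume "\<not> ?N *\<^sub>v v = 0\<^sub>v n"
  hence un: "u \<noteq> 0\<^sub>v n" unfolding u_def .
  from ex_min_wt[OF u un, of wt] obtain i0 where i0: "i0 < n" "u $ i0 \<noteq> 0"
    and mi: "\<And>j. j < n \<Longrightarrow> u $ j \<noteq> 0 \<Longrightarrow> wt i0 \<le> wt j" by blast
  have "(?N *\<^sub>v u) $ i0 = (f (wt i0) - e) * u $ i0"
    by (rule K1[OF u i0(1)]) (use mi in force)
  moreover have "(?N *\<^sub>v u) $ i0 = 0" using h i0 unfolding u_def by simp
  ultimately have fi0: "f (wt i0) = e" using i0 by simp
  have vn: "v \<noteq> 0\<^sub>v n"
  proof
    assume "v = 0\<^sub>v n" hence "u = 0\<^sub>v n" unfolding u_def using cM
      by (intro eq_vecI) (auto simp: scalar_prod_def)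
    thus False using un by simp
  qed
  from ex_min_wt[OF v vn, of wt] obtain j0 where j0: "j0 < n" "v $ j0 \<noteq> 0"
    and mj: "\<And>j. j < n \<Longrightarrow> v $ j \<noteq> 0 \<Longrightarrow> wt j0 \<le> wt j" by blast
  have hv: "u $ i = (f (wt i) - e) * v $ i" if "i < n" "wt i \<le> wt j0" for i
    unfolding u_def
  proof (rule K1[OF v that(1)])
    fix j assume "j < n" "wt j < wt i"
    thus "v $ j = 0" using mj[of j] that by force
  qed
  have "wt j0 \<le> wt i0"
  proof (rule ccontr)
    assume "\<not> ?thesis"
    hence "wt i0 < wt j0" by simp
    hence "v $ i0 = 0" using mj[OF i0(1)] by force
    hence "u $ i0 = 0" using hv[OF i0(1)] \<open>wt i0 < wt j0\<close> by simp
    thus False using i0 by simp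
  qed
  show False
  proof (cases "f (wt j0) = e")
    case False
    hence "u $ j0 \<noteq> 0" using hv[OF j0(1)] j0(2) by simp
    hence "wt i0 \<le> wt j0" using mi[OF j0(1)] by simp
    hence "wt i0 = wt j0" using \<open>wt j0 \<le> wt i0\<close> by simp
    thus False using fi0 False by simp
  next
    case True
    hence "f (wt j0) = f (wt i0)" using fi0 by simp
    hence "wt j0 = wt i0" using finj wt_le[OF j0(1)] wt_le[OF i0(1)]
      by (auto dest: inj_onD)
    hence "u $ i0 = 0" using hv[OF i0(1)] fi0 by simp
    thus False using i0 by simp
  qed
qed

lemma dge_2_1: "dim_gen_eigenspace M e 2 = dim_gen_eigenspace M e 1"
proof -
  let ?N = "char_matrix M e"
  have cM: "?N \<in> carrier_mat n n" using M by simp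
  have p2: "?N ^\<^sub>m 2 = ?N * ?N" using cM by (simp add: numeral_2_eq_2)
  have p1: "?N ^\<^sub>m 1 = ?N" using cM by simp
  have "mat_kernel (?N ^\<^sub>m 2) = mat_kernel (?N ^\<^sub>m 1)"
    unfolding p1 p2 mat_kernel_def using cM ker2 by auto
  moreover have "dim_col (?N ^\<^sub>m 2) = n" "dim_col (?N ^\<^sub>m 1) = n" using cM by (auto simp: p2)
  ultimately show ?thesis unfolding dim_gen_eigenspace_def kernel_dim_def by simp
qed

theorem main:
  "(\<exists>D. diagonal_mat D \<and> similar_mat M D) \<and> (\<forall>ev. eigenvalue M ev \<longleftrightarrow> (\<exists>i<n. f (wt i) = ev))
   \<and> (\<forall>ev. kernel_dim (char_matrix M ev) = card {i. i < n \<and> f (wt i) = ev})"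
proof -
  define n_as where "n_as = triangular_to_jnf_vector M"
  have jnf: "jordan_nf M n_as" unfolding n_as_def by (rule triangular_to_jnf_vector[OF M ut])
  hence nz: "0 \<notin> fst ` set n_as" and sim: "similar_mat M (jordan_matrix n_as)"
    unfolding jordan_nf_def by auto
  have one: "\<forall>(s,e)\<in>set n_as. s = 1"
  proof (intro ballI, clarify)
    fix s e assume se: "(s,e) \<in> set n_as"
    let ?L = "map fst (filter (\<lambda>(n, e'). e' = e) n_as)"
    have eq: "sum_list (map (min 2) ?L) = sum_list (map (min 1) ?L)"
      using dim_gen_eigenspace[OF jnf, of e 2] dim_gen_eigenspace[OF jnf, of e 1] dge_2_1 by simp
    have mem: "s \<in> set ?L" using se by force
    have le: "\<forall>x\<in>set ?L. min 1 x \<le> min (2::nat) x" by (simp add: min_def)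
    have "min 2 s = min 1 s" by (rule sum_list_eq_le[OF le eq mem])
    moreover have "s \<noteq> 0" using nz se by force
    ultimately show "s = 1" by simp
  qed
  have cp1: "char_poly M = (\<Prod>a\<leftarrow>diag_mat M. [:-a,1:])" by (rule char_poly_upper_triangular[OF M ut])
  have cp2: "char_poly M = (\<Prod>(s,e)\<leftarrow>n_as. [:-e,1:]^s)"
    using char_poly_similar[OF sim] jordan_matrix_char_poly by simp
  have cp3: "(\<Prod>(s,e)\<leftarrow>n_as. [:-e,1:]^s) = (\<Prod>e\<leftarrow>map snd n_as. [:-e,1:])"
    using one by (rule prod_one)
  have cpnz: "char_poly M \<noteq> 0" unfolding cp1 by (auto simp: prod_list_zero_iff)
  have cnt: "length (filter ((=) ev) (map snd n_as)) = card {i. i < n \<and> f (wt i) = ev}" for ev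
  proof -
    have "length (filter ((=) ev) (map snd n_as)) = Polynomial.order ev (char_poly M)"
      unfolding cp2 cp3 order_prod_lin ..
    also have "\<dots> = length (filter ((=) ev) (diag_mat M))" unfolding cp1 order_prod_lin ..
    also have "\<dots> = card {i. i < n \<and> f (wt i) = ev}"
      unfolding length_filter_conv_card using M diag
      by (intro arg_cong[where f=card] Collect_cong) (auto simp: diag_mat_def)
    finally show ?thesis .
  qed
  have kd: "kernel_dim (char_matrix M ev) = card {i. i < n \<and> f (wt i) = ev}" for ev
  proof -
    have cM: "char_matrix M ev \<in> carrier_mat n n" using M by simp
    have "kernel_dim (char_matrix M ev) = dim_gen_eigenspace M ev 1"
      unfolding dim_gen_eigenspace_def using cM by simp
    also have "\<dots> = sum_list (map (min 1) (map fst (filter (\<lambda>(n,e). e = ev) n_as)))"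
      by (rule dim_gen_eigenspace[OF jnf])
    also have "\<dots> = length (filter ((=) ev) (map snd n_as))"
      using one by (rule sum_one)
    also have "\<dots> = card {i. i < n \<and> f (wt i) = ev}" by (rule cnt)
    finally show ?thesis .
  qed
  have ev: "eigenvalue M ev \<longleftrightarrow> (\<exists>i<n. f (wt i) = ev)" for ev
  proof -
    have "eigenvalue M ev \<longleftrightarrow> poly (char_poly M) ev = 0" by (rule eigenvalue_root_char_poly[OF M])
    also have "\<dots> \<longleftrightarrow> Polynomial.order ev (char_poly M) \<noteq> 0" using cpnz by (simp add: order_root)
    also have "Polynomial.order ev (char_poly M) = card {i. i < n \<and> f (wt i) = ev}"
      unfolding cp2 cp3 order_prod_lin by (rule cnt)
    also have "\<dots> \<noteq> 0 \<longleftrightarrow> (\<exists>i<n. f (wt i) = ev)" by (auto simp: card_eq_0_iff)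
    finally show ?thesis .
  qed
  show ?thesis using jm_diag[OF one] sim kd ev by blast
qed

end


definition revm :: "nat \<Rightarrow> 'a::semiring_1 mat" where
  "revm n = mat n n (\<lambda>(i,j). if i + j = n - 1 then 1 else 0)"

lemma revm_left:
  fixes X :: "'a::semiring_1 mat"
  assumes X: "X \<in> carrier_mat n m"
  shows "revm n * X = mat n m (\<lambda>(i,j). X $$ (n-1-i, j))"
proof (rule eq_matI)
  fix i j assume i: "i < dim_row (mat n m (\<lambda>(i,j). X $$ (n-1-i, j)))" and j: "j < dim_col (mat n m (\<lambda>(i,j). X $$ (n-1-i, j)))"
  hence i: "i < n" and j: "j < m" by auto
  have "(revm n * X) $$ (i,j) = (\<Sum>k\<in>{0..<n}. (if i + k = n - 1 then 1 else 0) * X $$ (k,j))"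
    using X i j by (simp add: revm_def scalar_prod_def)
  also have "\<dots> = (\<Sum>k\<in>{0..<n}. if k = n - 1 - i then X $$ (k,j) else 0)"
    using i by (intro sum.cong) auto
  also have "\<dots> = X $$ (n-1-i, j)" using i by simp
  finally show "(revm n * X) $$ (i,j) = mat n m (\<lambda>(i,j). X $$ (n-1-i, j)) $$ (i,j)" using i j by simp
qed (use X in \<open>auto simp: revm_def\<close>)

lemma revm_right:
  fixes X :: "'a::semiring_1 mat"
  assumes X: "X \<in> carrier_mat m n"
  shows "X * revm n = mat m n (\<lambda>(i,j). X $$ (i, n-1-j))"
proof (rule eq_matI)
  fix i j assume i: "i < dim_row (mat m n (\<lambda>(i,j). X $$ (i, n-1-j)))" and j: "j < dim_col (mat m n (\<lambda>(i,j). X $$ (i, n-1-j)))"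
  hence i: "i < m" and j: "j < n" by auto
  have "(X * revm n) $$ (i,j) = (\<Sum>k\<in>{0..<n}. X $$ (i,k) * (if k + j = n - 1 then 1 else 0))"
    using X i j by (simp add: revm_def scalar_prod_def)
  also have "\<dots> = (\<Sum>k\<in>{0..<n}. if k = n - 1 - j then X $$ (i,k) else 0)"
    using j by (intro sum.cong) auto
  also have "\<dots> = X $$ (i, n-1-j)" using j by simp
  finally show "(X * revm n) $$ (i,j) = mat m n (\<lambda>(i,j). X $$ (i, n-1-j)) $$ (i,j)" using i j by simp
qed (use X in \<open>auto simp: revm_def\<close>)

lemma revm_carrier[simp]: "revm n \<in> carrier_mat n n" by (simp add: revm_def)

lemma revm_sq: "revm n * revm n = (1\<^sub>m n :: 'a::semiring_1 mat)"
  by (subst revm_left[OF revm_carrier], rule eq_matI) (auto simp: revm_def)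

lemma rev_sim:
  fixes M :: "'a::semiring_1 mat"
  assumes M: "M \<in> carrier_mat n n"
  shows "similar_mat M (mat n n (\<lambda>(i,j). M $$ (n-1-i, n-1-j)))"
proof -
  let ?M' = "mat n n (\<lambda>(i,j). M $$ (n-1-i, n-1-j))"
  have M': "?M' \<in> carrier_mat n n" by simp
  have dims: "dim_row M = n" "dim_col M = n" using M by auto
  have "revm n * ?M' * revm n = mat n n (\<lambda>(i,j). (revm n * ?M') $$ (i, n-1-j))"
    by (rule revm_right, rule mult_carrier_mat[OF revm_carrier M'])
  also have "\<dots> = M"
  proof (rule eq_matI)
    fix i j assume "i < dim_row M" "j < dim_col M"
    hence i: "i < n" and j: "j < n" using dims by auto
    have "(revm n * ?M') $$ (i, n-1-j) = ?M' $$ (n-1-i, n-1-j)"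
      unfolding revm_left[OF M'] using i j by simp
    also have "\<dots> = M $$ (i,j)" using i j by simp
    finally show "mat n n (\<lambda>(i,j). (revm n * ?M') $$ (i, n-1-j)) $$ (i,j) = M $$ (i,j)"
      using i j by simp
  qed (use dims in auto)
  finally have "revm n * ?M' * revm n = M" .
  hence "similar_mat_wit M ?M' (revm n) (revm n)"
    unfolding similar_mat_wit_def Let_def using M revm_sq[where 'a='a] by auto
  thus ?thesis unfolding similar_mat_def by blast
qed

lemma sim_transfer:
  fixes M M' :: "'a::field mat"
  assumes M: "M \<in> carrier_mat n n" and M': "M' \<in> carrier_mat n n" and sim: "similar_mat M M'"
  shows "eigenvalue M ev = eigenvalue M' ev"
    "kernel_dim (char_matrix M ev) = kernel_dim (char_matrix M' ev)"
proof -
  show "eigenvalue M ev = eigenvalue M' ev"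
    unfolding eigenvalue_root_char_poly[OF M] eigenvalue_root_char_poly[OF M'] char_poly_similar[OF sim] ..
  have "dim_gen_eigenspace M ev 1 = dim_gen_eigenspace M' ev 1"
    using dim_gen_eigenspace_similar[OF sim] by simp
  moreover have "char_matrix M ev \<in> carrier_mat n n" "char_matrix M' ev \<in> carrier_mat n n"
    using M M' by auto
  ultimately show "kernel_dim (char_matrix M ev) = kernel_dim (char_matrix M' ev)"
    unfolding dim_gen_eigenspace_def by simp
qed

lemma main_lower:
  fixes M :: "'a::field mat" and wt :: "nat \<Rightarrow> nat" and f :: "nat \<Rightarrow> 'a"
  assumes M: "M \<in> carrier_mat n n"
  and wt_le: "\<And>i. i < n \<Longrightarrow> wt i \<le> d"
  and finj: "inj_on f {0..d}"
  and diag: "\<And>i. i < n \<Longrightarrow> M $$ (i,i) = f (wt i)"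
  and pat: "\<And>i j. i < n \<Longrightarrow> j < n \<Longrightarrow> M $$ (i,j) \<noteq> 0 \<Longrightarrow> i \<noteq> j \<Longrightarrow> j < i \<and> wt j < wt i"
  shows "(\<exists>D. diagonal_mat D \<and> similar_mat M D) \<and> (\<forall>ev. eigenvalue M ev \<longleftrightarrow> (\<exists>i<n. f (wt i) = ev))
   \<and> (\<forall>ev. kernel_dim (char_matrix M ev) = card {i. i < n \<and> f (wt i) = ev})"
proof -
  let ?M' = "mat n n (\<lambda>(i,j). M $$ (n-1-i, n-1-j))"
  let ?w = "\<lambda>i. wt (n-1-i)"
  have M': "?M' \<in> carrier_mat n n" by simp
  have sim: "similar_mat M ?M'" by (rule rev_sim[OF M])
  interpret W: wtri ?M' n d ?w f
  proof
    show "upper_triangular ?M'"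
    proof (rule upper_triangularI)
      fix i j assume "j < i" "i < dim_row ?M'"
      thus "?M' $$ (i,j) = 0" using pat[of "n-1-i" "n-1-j"] by fastforce
    qed
    show "\<And>i. i < n \<Longrightarrow> ?w i \<le> d" using wt_le by simp
    show "\<And>i. i < n \<Longrightarrow> ?M' $$ (i,i) = f (?w i)" using diag by simp
    show "\<And>i j. i < n \<Longrightarrow> j < n \<Longrightarrow> ?M' $$ (i,j) \<noteq> 0 \<Longrightarrow> i \<noteq> j \<Longrightarrow> ?w j < ?w i"
      using pat by fastforce
  qed (use M' finj in auto)
  have R: "(\<exists>D. diagonal_mat D \<and> similar_mat ?M' D) \<and> (\<forall>ev. eigenvalue ?M' ev \<longleftrightarrow> (\<exists>i<n. f (?w i) = ev))
   \<and> (\<forall>ev. kernel_dim (char_matrix ?M' ev) = card {i. i < n \<and> f (?w i) = ev})" by (rule W.main)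
  have ex: "(\<exists>i<n. f (?w i) = ev) \<longleftrightarrow> (\<exists>i<n. f (wt i) = ev)" for ev
  proof
    assume "\<exists>i<n. f (?w i) = ev" then obtain i where "i < n" "f (?w i) = ev" by blast
    thus "\<exists>i<n. f (wt i) = ev" by (intro exI[of _ "n-1-i"]) auto
  next
    assume "\<exists>i<n. f (wt i) = ev" then obtain i where i: "i < n" "f (wt i) = ev" by blast
    hence "f (?w (n-1-i)) = ev" by (simp add: Suc_diff_Suc)
    thus "\<exists>i<n. f (?w i) = ev" using i by (intro exI[of _ "n-1-i"]) auto
  qed
  have cd: "card {i. i < n \<and> f (?w i) = ev} = card {i. i < n \<and> f (wt i) = ev}" for ev
  proof -
    have "{i. i < n \<and> f (wt i) = ev} = (\<lambda>i. n-1-i) ` {i. i < n \<and> f (?w i) = ev}"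
    proof
      show "{i. i < n \<and> f (wt i) = ev} \<subseteq> (\<lambda>i. n-1-i) ` {i. i < n \<and> f (?w i) = ev}"
      proof
        fix x assume x: "x \<in> {i. i < n \<and> f (wt i) = ev}"
        hence "n - 1 - x \<in> {i. i < n \<and> f (?w i) = ev}" "x = n - 1 - (n - 1 - x)" by auto
        thus "x \<in> (\<lambda>i. n-1-i) ` {i. i < n \<and> f (?w i) = ev}" by blast
      qed
    qed auto
    moreover have "inj_on (\<lambda>i. n-1-i) {i. i < n \<and> f (?w i) = ev}" by (rule inj_onI) auto
    ultimately show ?thesis by (simp add: card_image)
  qed
  from R obtain D where D: "diagonal_mat D" "similar_mat ?M' D" by blast
  have 1: "\<exists>D. diagonal_mat D \<and> similar_mat M D" using D similar_mat_trans[OF sim D(2)] by blast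
  have 2: "\<forall>ev. eigenvalue M ev \<longleftrightarrow> (\<exists>i<n. f (wt i) = ev)"
    using R ex sim_transfer(1)[OF M M' sim] by blast
  have 3: "\<forall>ev. kernel_dim (char_matrix M ev) = card {i. i < n \<and> f (wt i) = ev}"
    using R cd sim_transfer(2)[OF M M' sim] by presburger
  show ?thesis using 1 2 3 by blast
qed



fun pc :: "nat \<Rightarrow> nat \<Rightarrow> nat" where
  "pc 0 i = 0"
| "pc (Suc m) i = i div 2^m + pc m (i mod 2^m)"

lemma split2:
  assumes "i < 2 * (N::nat)"
  obtains a i' where "i = a * N + i'" "a < 2" "i' < N" "i div N = a" "i mod N = i'"
proof -
  have N: "N > 0" using assms by auto
  have "i div N < 2" using assms by (simp add: less_mult_imp_div_less mult.commute)
  moreover have "i mod N < N" using N by simp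
  ultimately show ?thesis using that[of "i div N" "i mod N"] by simp
qed

lemma pc_lt: "i < 2 * 2^m \<Longrightarrow> i = a * 2^m + i' \<Longrightarrow> a < 2 \<Longrightarrow> i' < 2^m \<Longrightarrow> pc (Suc m) i = a + pc m i'"
  by simp

lemma pc_le: "i < 2^m \<Longrightarrow> pc m i \<le> m"
proof (induct m arbitrary: i)
  case (Suc m)
  from Suc(2) have "i < 2 * 2^m" by simp
  then obtain a i' where "i = a * 2^m + i'" "a < 2" "i' < 2^m" "i div 2^m = a" "i mod 2^m = i'"
    by (rule split2)
  thus ?case using Suc(1)[of i'] by simp
qed simp

lemma kron_dims[simp]: "dim_row (kron M N) = dim_row M * dim_row N" "dim_col (kron M N) = dim_col M * dim_col N"
  by (auto simp: kron_def)

lemma kron_idx: "i < dim_row M * dim_row N \<Longrightarrow> j < dim_col M * dim_col N \<Longrightarrow>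
  kron M N $$ (i,j) = M $$ (i div dim_row N, j div dim_col N) * N $$ (i mod dim_row N, j mod dim_col N)"
  by (simp add: kron_def)

lemma evalV_dims[simp]: "dim_row (evalV q \<alpha> g) = 2" "dim_col (evalV q \<alpha> g) = 2"
  by (auto simp: evalV_def)

lemma tens_dims_Nil: "dim_row (tens q [] g) = 1 \<and> dim_col (tens q [] g) = 1"
  by (cases g) auto

lemma tens_dims_Cons: "(\<And>h. dim_row (tens q as h) = 2 ^ length as \<and> dim_col (tens q as h) = 2 ^ length as) \<Longrightarrow>
   dim_row (tens q (a#as) g) = 2 ^ length (a#as) \<and> dim_col (tens q (a#as) g) = 2 ^ length (a#as)"
  by (cases g) (simp_all only: tens.simps gen.case; simp)+

lemma tens_dims: "dim_row (tens q as g) = 2 ^ length as \<and> dim_col (tens q as g) = 2 ^ length as"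
proof (induct as arbitrary: g)
  case Nil show ?case using tens_dims_Nil[of q g] by (simp del: tens.simps)
next
  case (Cons a as) thus ?case by (rule tens_dims_Cons)
qed

lemma tens_carrier: "tens q as g \<in> carrier_mat (2 ^ length as) (2 ^ length as)"
  unfolding carrier_mat_def using tens_dims[of q as g] by blast

lemma tens_cons:
  "tens q (\<alpha>#as) K0 = kron (evalV q \<alpha> K0) (tens q as K0)"
  "tens q (\<alpha>#as) K1 = kron (evalV q \<alpha> K1) (tens q as K1)"
  "tens q (\<alpha>#as) K0inv = kron (evalV q \<alpha> K0inv) (tens q as K0inv)"
  "tens q (\<alpha>#as) K1inv = kron (evalV q \<alpha> K1inv) (tens q as K1inv)"
  "tens q (\<alpha>#as) E0p = kron (evalV q \<alpha> E0p) (tens q as K0) + kron (1\<^sub>m 2) (tens q as E0p)"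
  "tens q (\<alpha>#as) E1p = kron (evalV q \<alpha> E1p) (tens q as K1) + kron (1\<^sub>m 2) (tens q as E1p)"
  "tens q (\<alpha>#as) E0m = kron (evalV q \<alpha> E0m) (1\<^sub>m (2 ^ length as)) + kron (evalV q \<alpha> K0inv) (tens q as E0m)"
  "tens q (\<alpha>#as) E1m = kron (evalV q \<alpha> E1m) (1\<^sub>m (2 ^ length as)) + kron (evalV q \<alpha> K1inv) (tens q as E1m)"
  by (simp_all only: tens.simps gen.case)

lemma tens_nil:
  "tens q [] K0 = 1\<^sub>m 1" "tens q [] K1 = 1\<^sub>m 1" "tens q [] K0inv = 1\<^sub>m 1" "tens q [] K1inv = 1\<^sub>m 1"
  "tens q [] E0p = 0\<^sub>m 1 1" "tens q [] E1p = 0\<^sub>m 1 1" "tens q [] E0m = 0\<^sub>m 1 1" "tens q [] E1m = 0\<^sub>m 1 1"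
  by (simp_all only: tens.simps gen.case)

lemma evalV_idx:
  assumes "a < 2" "b < 2"
  shows "evalV q \<alpha> K0 $$ (a,b) = (if a = b then (if a = 0 then inverse q else q) else 0)"
  "evalV q \<alpha> K1 $$ (a,b) = (if a = b then (if a = 0 then q else inverse q) else 0)"
  "evalV q \<alpha> K0inv $$ (a,b) = (if a = b then (if a = 0 then q else inverse q) else 0)"
  "evalV q \<alpha> K1inv $$ (a,b) = (if a = b then (if a = 0 then inverse q else q) else 0)"
  "evalV q \<alpha> E1m $$ (a,b) = (if a = 1 \<and> b = 0 then 1 else 0)"
  "evalV q \<alpha> E1p $$ (a,b) = (if a = 0 \<and> b = 1 then 1 else 0)"
  "evalV q \<alpha> E0m $$ (a,b) = (if a = 0 \<and> b = 1 then q * inverse \<alpha> else 0)"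
  "evalV q \<alpha> E0p $$ (a,b) = (if a = 1 \<and> b = 0 then inverse q * \<alpha> else 0)"
  using assms by (simp_all add: evalV_def)

lemma kron_2:
  fixes M X :: "'a::semiring_1 mat"
  assumes M: "M \<in> carrier_mat 2 2" and X: "X \<in> carrier_mat N N"
  and i: "i = a * N + i'" "a < 2" "i' < N" and j: "j = b * N + j'" "b < 2" "j' < N"
  shows "kron M X $$ (i,j) = M $$ (a,b) * X $$ (i',j')"
proof -
  have aN: "a * N \<le> 1 * N" "b * N \<le> 1 * N" using i(2) j(2) by (intro mult_le_mono1; simp)+
  have "i < 2 * N" "j < 2 * N" using i j aN by linarith+
  moreover have "i div N = a" "i mod N = i'" "j div N = b" "j mod N = j'" using i j by auto
  ultimately show ?thesis using M X by (simp add: kron_idx)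
qed


lemma pw:
  fixes q :: "'a::field"
  assumes "q \<noteq> 0"
  shows "q powi (x + 1) = q powi x * q" "q powi (x - 1) = q powi x * inverse q"
proof -
  show "q powi (x + 1) = q powi x * q" using power_int_add[of q x 1] assms by simp
  show "q powi (x - 1) = q powi x * inverse q" using power_int_add[of q x "-1"] assms by simp
qed

lemma tens_K:
  fixes q :: "'a::field"
  assumes q: "q \<noteq> 0"
  shows "i < 2^length as \<Longrightarrow> j < 2^length as \<Longrightarrow>
    tens q as K0 $$ (i,j) = (if i = j then q powi (2 * int (pc (length as) i) - int (length as)) else 0) \<and>
    tens q as K1 $$ (i,j) = (if i = j then q powi (int (length as) - 2 * int (pc (length as) i)) else 0) \<and>
    (i \<noteq> j \<longrightarrow> tens q as K0inv $$ (i,j) = 0) \<and> (i \<noteq> j \<longrightarrow> tens q as K1inv $$ (i,j) = 0)"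
proof (induct as arbitrary: i j)
  case Nil
  thus ?case by (simp add: tens_nil)
next
  case (Cons \<alpha> as)
  let ?m = "length as" let ?N = "2 ^ length as :: nat"
  from Cons(2) have "i < 2 * ?N" by simp
  then obtain a i' where i: "i = a * ?N + i'" "a < 2" "i' < ?N" "i div ?N = a" "i mod ?N = i'" by (rule split2)
  from Cons(3) have "j < 2 * ?N" by simp
  then obtain b j' where j: "j = b * ?N + j'" "b < 2" "j' < ?N" "j div ?N = b" "j mod ?N = j'" by (rule split2)
  have ev: "evalV q \<alpha> g \<in> carrier_mat 2 2" for g by (rule carrier_matI) simp_all
  have kr: "kron (evalV q \<alpha> g) (tens q as h) $$ (i,j) = evalV q \<alpha> g $$ (a,b) * tens q as h $$ (i',j')" for g h
    by (rule kron_2[OF ev tens_carrier i(1-3) j(1-3)])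
  have IH: "tens q as K0 $$ (i',j') = (if i' = j' then q powi (2 * int (pc ?m i') - int ?m) else 0) \<and>
    tens q as K1 $$ (i',j') = (if i' = j' then q powi (int ?m - 2 * int (pc ?m i')) else 0) \<and>
    (i' \<noteq> j' \<longrightarrow> tens q as K0inv $$ (i',j') = 0) \<and> (i' \<noteq> j' \<longrightarrow> tens q as K1inv $$ (i',j') = 0)"
    using Cons(1)[OF i(3) j(3)] .
  have ij: "(i = j) = (a = b \<and> i' = j')"
  proof
    assume "i = j" thus "a = b \<and> i' = j'" using i(4,5) j(4,5) by auto
  qed (use i j in simp)
  have pci: "pc (length (\<alpha>#as)) i = a + pc ?m i'" using i by simp
  have a01: "a = 0 \<or> a = 1" using i(2) by auto
  have pe0: "q powi (2 * int (pc (length (\<alpha>#as)) i) - int (length (\<alpha>#as))) = (if a = 0 then inverse q else q) * q powi (2 * int (pc ?m i') - int ?m)"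
  proof (cases "a = 0")
    case True
    have e: "2 * int (pc (length (\<alpha>#as)) i) - int (length (\<alpha>#as)) = (2 * int (pc ?m i') - int ?m) - 1" using pci True by simp
    show ?thesis unfolding e pw(2)[OF q] using True by (simp add: mult.commute)
  next
    case False hence a1: "a = 1" using a01 by simp
    have e: "2 * int (pc (length (\<alpha>#as)) i) - int (length (\<alpha>#as)) = (2 * int (pc ?m i') - int ?m) + 1" using pci a1 by simp
    show ?thesis unfolding e pw(1)[OF q] using a1 by (simp add: mult.commute)
  qed
  have pe1: "q powi (int (length (\<alpha>#as)) - 2 * int (pc (length (\<alpha>#as)) i)) = (if a = 0 then q else inverse q) * q powi (int ?m - 2 * int (pc ?m i'))"
  proof (cases "a = 0")
    case True
    have e: "int (length (\<alpha>#as)) - 2 * int (pc (length (\<alpha>#as)) i) = (int ?m - 2 * int (pc ?m i')) + 1" using pci True by simp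
    show ?thesis unfolding e pw(1)[OF q] using True by (simp add: mult.commute)
  next
    case False hence a1: "a = 1" using a01 by simp
    have e: "int (length (\<alpha>#as)) - 2 * int (pc (length (\<alpha>#as)) i) = (int ?m - 2 * int (pc ?m i')) - 1" using pci a1 by simp
    show ?thesis unfolding e pw(2)[OF q] using a1 by (simp add: mult.commute)
  qed
  have K0: "tens q (\<alpha>#as) K0 $$ (i,j) = (if i = j then q powi (2 * int (pc (length (\<alpha>#as)) i) - int (length (\<alpha>#as))) else 0)"
  proof (cases "i = j")
    case True
    hence ab: "a = b" "i' = j'" using ij by auto
    have "tens q (\<alpha>#as) K0 $$ (i,j) = (if a = 0 then inverse q else q) * q powi (2 * int (pc ?m i') - int ?m)"
      unfolding tens_cons kr using ab IH i(2) by (simp add: evalV_idx)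
    thus ?thesis using True pe0 by simp
  next
    case False
    thus ?thesis unfolding tens_cons kr using ij IH i(2) j(2) by (auto simp: evalV_idx)
  qed
  have K1: "tens q (\<alpha>#as) K1 $$ (i,j) = (if i = j then q powi (int (length (\<alpha>#as)) - 2 * int (pc (length (\<alpha>#as)) i)) else 0)"
  proof (cases "i = j")
    case True
    hence ab: "a = b" "i' = j'" using ij by auto
    have "tens q (\<alpha>#as) K1 $$ (i,j) = (if a = 0 then q else inverse q) * q powi (int ?m - 2 * int (pc ?m i'))"
      unfolding tens_cons kr using ab IH i(2) by (simp add: evalV_idx)
    thus ?thesis using True pe1 by simp
  next
    case False
    thus ?thesis unfolding tens_cons kr using ij IH i(2) j(2) by (auto simp: evalV_idx)
  qed
  have K0i: "i \<noteq> j \<longrightarrow> tens q (\<alpha>#as) K0inv $$ (i,j) = 0"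
    unfolding tens_cons kr using ij IH i(2) j(2) by (auto simp: evalV_idx)
  have K1i: "i \<noteq> j \<longrightarrow> tens q (\<alpha>#as) K1inv $$ (i,j) = 0"
    unfolding tens_cons kr using ij IH i(2) j(2) by (auto simp: evalV_idx)
  show ?case using K0 K1 K0i K1i by blast
qed


lemma one2_idx: "a < 2 \<Longrightarrow> b < 2 \<Longrightarrow> (1\<^sub>m 2 :: 'a::semiring_1 mat) $$ (a,b) = (if a = b then 1 else 0)"
  by simp

lemma tens_E:
  fixes q :: "'a::field"
  assumes q: "q \<noteq> 0"
  shows "i < 2^length as \<Longrightarrow> j < 2^length as \<Longrightarrow>
    (tens q as E0p $$ (i,j) \<noteq> 0 \<longrightarrow> j < i \<and> pc (length as) j < pc (length as) i) \<and>
    (tens q as E1m $$ (i,j) \<noteq> 0 \<longrightarrow> j < i \<and> pc (length as) j < pc (length as) i) \<and>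
    (tens q as E1p $$ (i,j) \<noteq> 0 \<longrightarrow> i < j \<and> pc (length as) i < pc (length as) j) \<and>
    (tens q as E0m $$ (i,j) \<noteq> 0 \<longrightarrow> i < j \<and> pc (length as) i < pc (length as) j)"
proof (induct as arbitrary: i j)
  case Nil
  thus ?case by (simp add: tens_nil)
next
  case (Cons \<alpha> as)
  let ?m = "length as" let ?N = "2 ^ length as :: nat"
  from Cons(2) have "i < 2 * ?N" by simp
  then obtain a i' where i: "i = a * ?N + i'" "a < 2" "i' < ?N" "i div ?N = a" "i mod ?N = i'" by (rule split2)
  from Cons(3) have "j < 2 * ?N" by simp
  then obtain b j' where j: "j = b * ?N + j'" "b < 2" "j' < ?N" "j div ?N = b" "j mod ?N = j'" by (rule split2)
  have kr: "X \<in> carrier_mat 2 2 \<Longrightarrow> Y \<in> carrier_mat ?N ?N \<Longrightarrow> kron X Y $$ (i,j) = X $$ (a,b) * Y $$ (i',j')" for X Y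
    by (rule kron_2[OF _ _ i(1-3) j(1-3)])
  have ev: "evalV q \<alpha> g \<in> carrier_mat 2 2" for g by (rule carrier_matI) simp_all
  have o2: "(1\<^sub>m 2 :: 'a mat) \<in> carrier_mat 2 2" by simp
  have oN: "(1\<^sub>m ?N :: 'a mat) \<in> carrier_mat ?N ?N" by simp
  have tc: "tens q as g \<in> carrier_mat ?N ?N" for g by (rule tens_carrier)
  have add: "(kron X Y + kron X' Y') $$ (i,j) = kron X Y $$ (i,j) + kron X' Y' $$ (i,j)"
    if "X' \<in> carrier_mat 2 2" "Y' \<in> carrier_mat ?N ?N" for X Y X' Y'
  proof -
    have "i < dim_row (kron X' Y')" "j < dim_col (kron X' Y')" using that Cons(2,3) by auto
    thus ?thesis by simp
  qed
  have IH: "(tens q as E0p $$ (i',j') \<noteq> 0 \<longrightarrow> j' < i' \<and> pc ?m j' < pc ?m i') \<and>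
    (tens q as E1m $$ (i',j') \<noteq> 0 \<longrightarrow> j' < i' \<and> pc ?m j' < pc ?m i') \<and>
    (tens q as E1p $$ (i',j') \<noteq> 0 \<longrightarrow> i' < j' \<and> pc ?m i' < pc ?m j') \<and>
    (tens q as E0m $$ (i',j') \<noteq> 0 \<longrightarrow> i' < j' \<and> pc ?m i' < pc ?m j')"
    by (rule Cons(1)[OF i(3) j(3)])
  have KK: "tens q as K0 $$ (i',j') \<noteq> 0 \<Longrightarrow> i' = j'" "tens q as K1 $$ (i',j') \<noteq> 0 \<Longrightarrow> i' = j'"
    using tens_K[OF q i(3) j(3)] by (auto split: if_splits)
  have pci: "pc (length (\<alpha>#as)) i = a + pc ?m i'" using i by simp
  have pcj: "pc (length (\<alpha>#as)) j = b + pc ?m j'" using j by simp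
  have lt10: "a = 1 \<Longrightarrow> b = 0 \<Longrightarrow> j < i" using i j by simp
  have lt01: "a = 0 \<Longrightarrow> b = 1 \<Longrightarrow> i < j" using i j by simp
  have ltaa: "a = b \<Longrightarrow> j' < i' \<Longrightarrow> j < i" "a = b \<Longrightarrow> i' < j' \<Longrightarrow> i < j" using i j by simp_all
  have e1: "tens q (\<alpha>#as) E0p $$ (i,j) \<noteq> 0 \<longrightarrow> j < i \<and> pc (length (\<alpha>#as)) j < pc (length (\<alpha>#as)) i"
  proof
    assume nz: "tens q (\<alpha>#as) E0p $$ (i,j) \<noteq> 0"
    have "tens q (\<alpha>#as) E0p $$ (i,j) = evalV q \<alpha> E0p $$ (a,b) * tens q as K0 $$ (i',j') + (1\<^sub>m 2) $$ (a,b) * tens q as E0p $$ (i',j')"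
      unfolding tens_cons add[OF o2 tc] kr[OF ev tc] kr[OF o2 tc] ..
    with nz have "(evalV q \<alpha> E0p $$ (a,b) \<noteq> 0 \<and> tens q as K0 $$ (i',j') \<noteq> 0) \<or> ((1\<^sub>m 2 :: 'a mat) $$ (a,b) \<noteq> 0 \<and> tens q as E0p $$ (i',j') \<noteq> 0)"
      by auto
    thus "j < i \<and> pc (length (\<alpha>#as)) j < pc (length (\<alpha>#as)) i"
    proof
      assume h: "evalV q \<alpha> E0p $$ (a,b) \<noteq> 0 \<and> tens q as K0 $$ (i',j') \<noteq> 0"
      hence "a = 1" "b = 0" using i(2) j(2) by (auto simp: evalV_idx split: if_splits)
      moreover have "i' = j'" using KK h by auto
      ultimately show ?thesis using lt10 pci pcj by simp
    next
      assume h: "(1\<^sub>m 2 :: 'a mat) $$ (a,b) \<noteq> 0 \<and> tens q as E0p $$ (i',j') \<noteq> 0"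
      hence "a = b" using i(2) j(2) by (auto split: if_splits)
      moreover have "j' < i' \<and> pc ?m j' < pc ?m i'" using IH h by auto
      ultimately show ?thesis using ltaa pci pcj by simp
    qed
  qed
  have e2: "tens q (\<alpha>#as) E1m $$ (i,j) \<noteq> 0 \<longrightarrow> j < i \<and> pc (length (\<alpha>#as)) j < pc (length (\<alpha>#as)) i"
  proof
    assume nz: "tens q (\<alpha>#as) E1m $$ (i,j) \<noteq> 0"
    have "tens q (\<alpha>#as) E1m $$ (i,j) = evalV q \<alpha> E1m $$ (a,b) * (1\<^sub>m ?N) $$ (i',j') + evalV q \<alpha> K1inv $$ (a,b) * tens q as E1m $$ (i',j')"
      unfolding tens_cons add[OF ev tc] kr[OF ev tc] kr[OF ev oN] ..
    with nz have "(evalV q \<alpha> E1m $$ (a,b) \<noteq> 0 \<and> (1\<^sub>m ?N :: 'a mat) $$ (i',j') \<noteq> 0) \<or> (evalV q \<alpha> K1inv $$ (a,b) \<noteq> 0 \<and> tens q as E1m $$ (i',j') \<noteq> 0)"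
      by auto
    thus "j < i \<and> pc (length (\<alpha>#as)) j < pc (length (\<alpha>#as)) i"
    proof
      assume h: "evalV q \<alpha> E1m $$ (a,b) \<noteq> 0 \<and> (1\<^sub>m ?N :: 'a mat) $$ (i',j') \<noteq> 0"
      hence "a = 1" "b = 0" using i(2) j(2) by (auto simp: evalV_idx split: if_splits)
      moreover have "i' = j'" using h i(3) j(3) by (auto split: if_splits)
      ultimately show ?thesis using lt10 pci pcj by simp
    next
      assume h: "evalV q \<alpha> K1inv $$ (a,b) \<noteq> 0 \<and> tens q as E1m $$ (i',j') \<noteq> 0"
      hence "a = b" using i(2) j(2) by (auto simp: evalV_idx split: if_splits)
      moreover have "j' < i' \<and> pc ?m j' < pc ?m i'" using IH h by auto
      ultimately show ?thesis using ltaa pci pcj by simp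
    qed
  qed
  have e3: "tens q (\<alpha>#as) E1p $$ (i,j) \<noteq> 0 \<longrightarrow> i < j \<and> pc (length (\<alpha>#as)) i < pc (length (\<alpha>#as)) j"
  proof
    assume nz: "tens q (\<alpha>#as) E1p $$ (i,j) \<noteq> 0"
    have "tens q (\<alpha>#as) E1p $$ (i,j) = evalV q \<alpha> E1p $$ (a,b) * tens q as K1 $$ (i',j') + (1\<^sub>m 2) $$ (a,b) * tens q as E1p $$ (i',j')"
      unfolding tens_cons add[OF o2 tc] kr[OF ev tc] kr[OF o2 tc] ..
    with nz have "(evalV q \<alpha> E1p $$ (a,b) \<noteq> 0 \<and> tens q as K1 $$ (i',j') \<noteq> 0) \<or> ((1\<^sub>m 2 :: 'a mat) $$ (a,b) \<noteq> 0 \<and> tens q as E1p $$ (i',j') \<noteq> 0)"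
      by auto
    thus "i < j \<and> pc (length (\<alpha>#as)) i < pc (length (\<alpha>#as)) j"
    proof
      assume h: "evalV q \<alpha> E1p $$ (a,b) \<noteq> 0 \<and> tens q as K1 $$ (i',j') \<noteq> 0"
      hence "a = 0" "b = 1" using i(2) j(2) by (auto simp: evalV_idx split: if_splits)
      moreover have "i' = j'" using KK h by auto
      ultimately show ?thesis using lt01 pci pcj by simp
    next
      assume h: "(1\<^sub>m 2 :: 'a mat) $$ (a,b) \<noteq> 0 \<and> tens q as E1p $$ (i',j') \<noteq> 0"
      hence "a = b" using i(2) j(2) by (auto split: if_splits)
      moreover have "i' < j' \<and> pc ?m i' < pc ?m j'" using IH h by auto
      ultimately show ?thesis using ltaa pci pcj by simp
    qed
  qed
  have e4: "tens q (\<alpha>#as) E0m $$ (i,j) \<noteq> 0 \<longrightarrow> i < j \<and> pc (length (\<alpha>#as)) i < pc (length (\<alpha>#as)) j"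
  proof
    assume nz: "tens q (\<alpha>#as) E0m $$ (i,j) \<noteq> 0"
    have "tens q (\<alpha>#as) E0m $$ (i,j) = evalV q \<alpha> E0m $$ (a,b) * (1\<^sub>m ?N) $$ (i',j') + evalV q \<alpha> K0inv $$ (a,b) * tens q as E0m $$ (i',j')"
      unfolding tens_cons add[OF ev tc] kr[OF ev tc] kr[OF ev oN] ..
    with nz have "(evalV q \<alpha> E0m $$ (a,b) \<noteq> 0 \<and> (1\<^sub>m ?N :: 'a mat) $$ (i',j') \<noteq> 0) \<or> (evalV q \<alpha> K0inv $$ (a,b) \<noteq> 0 \<and> tens q as E0m $$ (i',j') \<noteq> 0)"
      by auto
    thus "i < j \<and> pc (length (\<alpha>#as)) i < pc (length (\<alpha>#as)) j"
    proof
      assume h: "evalV q \<alpha> E0m $$ (a,b) \<noteq> 0 \<and> (1\<^sub>m ?N :: 'a mat) $$ (i',j') \<noteq> 0"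
      hence "a = 0" "b = 1" using i(2) j(2) by (auto simp: evalV_idx split: if_splits)
      moreover have "i' = j'" using h i(3) j(3) by (auto split: if_splits)
      ultimately show ?thesis using lt01 pci pcj by simp
    next
      assume h: "evalV q \<alpha> K0inv $$ (a,b) \<noteq> 0 \<and> tens q as E0m $$ (i',j') \<noteq> 0"
      hence "a = b" using i(2) j(2) by (auto simp: evalV_idx split: if_splits)
      moreover have "i' < j' \<and> pc ?m i' < pc ?m j'" using IH h by auto
      ultimately show ?thesis using ltaa pci pcj by simp
    qed
  qed
  show ?case using e1 e2 e3 e4 by blast
qed



lemma mult_diag_right:
  fixes X Dm :: "'a::field mat"
  assumes X: "X \<in> carrier_mat n n" and Dm: "Dm \<in> carrier_mat n n"
  and dz: "\<And>i j. i < n \<Longrightarrow> j < n \<Longrightarrow> i \<noteq> j \<Longrightarrow> Dm $$ (i,j) = 0"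
  and i: "i < n" and j: "j < n"
  shows "(X * Dm) $$ (i,j) = X $$ (i,j) * Dm $$ (j,j)"
proof -
  have "(X * Dm) $$ (i,j) = (\<Sum>k\<in>{0..<n}. X $$ (i,k) * Dm $$ (k,j))"
    using X Dm i j by (simp add: scalar_prod_def)
  also have "\<dots> = (\<Sum>k\<in>{0..<n}. if k = j then X $$ (i,j) * Dm $$ (j,j) else 0)"
    by (rule sum.cong) (use dz j in auto)
  also have "\<dots> = X $$ (i,j) * Dm $$ (j,j)" using j by simp
  finally show ?thesis .
qed

lemma card_pc: "card {i. i < 2^m \<and> pc m i = k} = m choose k"
proof (induct m arbitrary: k)
  case 0
  have "{i. i < 2^0 \<and> pc 0 i = k} = (if k = 0 then {0} else {})" by auto
  thus ?case by simp
next
  case (Suc m)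
  let ?N = "2^m :: nat"
  have lowpc: "i < ?N \<Longrightarrow> pc (Suc m) i = pc m i" for i by simp
  have highpc: "j < ?N \<Longrightarrow> pc (Suc m) (?N + j) = 1 + pc m j" for j by simp
  have split: "{i. i < 2^Suc m \<and> pc (Suc m) i = k} =
    {i. i < ?N \<and> pc m i = k} \<union> (\<lambda>j. ?N + j) ` {j. j < ?N \<and> 1 + pc m j = k}"
  proof -
    have "x \<in> {i. i < 2^Suc m \<and> pc (Suc m) i = k} \<longleftrightarrow> x \<in> {i. i < ?N \<and> pc m i = k} \<union> (\<lambda>j. ?N + j) ` {j. j < ?N \<and> 1 + pc m j = k}" for x
    proof (cases "x < ?N")
      case True thus ?thesis using lowpc[OF True] by auto
    next
      case False
      then obtain j where j: "x = ?N + j" by (metis le_add_diff_inverse not_less)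
      show ?thesis
      proof
        assume "x \<in> {i. i < 2^Suc m \<and> pc (Suc m) i = k}"
        hence "j < ?N" "pc (Suc m) (?N + j) = k" using j by auto
        thus "x \<in> {i. i < ?N \<and> pc m i = k} \<union> (\<lambda>j. ?N + j) ` {j. j < ?N \<and> 1 + pc m j = k}"
          using highpc j by auto
      next
        assume "x \<in> {i. i < ?N \<and> pc m i = k} \<union> (\<lambda>j. ?N + j) ` {j. j < ?N \<and> 1 + pc m j = k}"
        hence "j < ?N \<and> 1 + pc m j = k" using j False by auto
        thus "x \<in> {i. i < 2^Suc m \<and> pc (Suc m) i = k}" using highpc j by auto
      qed
    qed
    thus ?thesis by blast
  qed
  have disj: "{i. i < ?N \<and> pc m i = k} \<inter> (\<lambda>j. ?N + j) ` {j. j < ?N \<and> 1 + pc m j = k} = {}" by auto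
  have c2: "card ((\<lambda>j. ?N + j) ` {j. j < ?N \<and> 1 + pc m j = k}) = card {j. j < ?N \<and> 1 + pc m j = k}"
    by (rule card_image) (auto simp: inj_on_def)
  have "card {i. i < 2^Suc m \<and> pc (Suc m) i = k} = card {i. i < ?N \<and> pc m i = k} + card {j. j < ?N \<and> 1 + pc m j = k}"
    unfolding split by (subst card_Un_disjoint) (use disj c2 in auto)
  also have "\<dots> = Suc m choose k"
  proof (cases k)
    case 0
    have "{j. j < ?N \<and> 1 + pc m j = k} = {}" using 0 by auto
    thus ?thesis using Suc[of k] 0 by simp
  next
    case (Suc k')
    have "{j. j < ?N \<and> 1 + pc m j = k} = {j. j < ?N \<and> pc m j = k'}" using Suc by auto
    thus ?thesis using Suc \<open>\<And>k. card {i. i < 2 ^ m \<and> pc m i = k} = m choose k\<close>[of k] 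
      \<open>\<And>k. card {i. i < 2 ^ m \<and> pc m i = k} = m choose k\<close>[of k'] by simp
  qed
  finally show ?case .
qed

context
  fixes q :: "'a::field" and as :: "'a list"
  assumes q: "q \<noteq> 0"
begin

lemma diag_K:
  "i < 2^length as \<Longrightarrow> j < 2^length as \<Longrightarrow> i \<noteq> j \<Longrightarrow> tens q as K0 $$ (i,j) = 0"
  "i < 2^length as \<Longrightarrow> j < 2^length as \<Longrightarrow> i \<noteq> j \<Longrightarrow> tens q as K1 $$ (i,j) = 0"
  using tens_K[OF q] by auto

lemma opA_idx:
  assumes i: "i < 2^length as" and j: "j < 2^length as"
  shows "opA q as a b c u v $$ (i,j) = (if i = j then a else 0) + b * tens q as K0 $$ (i,j) + c * tens q as K1 $$ (i,j)
     + u * tens q as E0p $$ (i,j) + v * (tens q as E1m $$ (i,j) * tens q as K1 $$ (j,j))"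
proof -
  have tc: "tens q as g \<in> carrier_mat (2^length as) (2^length as)" for g by (rule tens_carrier)
  have m: "(tens q as E1m * tens q as K1) $$ (i,j) = tens q as E1m $$ (i,j) * tens q as K1 $$ (j,j)"
    by (rule mult_diag_right[OF tc tc diag_K(2) i j])
  have dr: "dim_row (tens q as g) = 2^length as" "dim_col (tens q as g) = 2^length as" for g
    using tens_dims by blast+
  show ?thesis unfolding opA_def using i j m dr by simp
qed

lemma opAs_idx:
  assumes i: "i < 2^length as" and j: "j < 2^length as"
  shows "opAs q as a b c u v $$ (i,j) = (if i = j then a else 0) + b * tens q as K0 $$ (i,j) + c * tens q as K1 $$ (i,j)
     + u * tens q as E1p $$ (i,j) + v * (tens q as E0m $$ (i,j) * tens q as K0 $$ (j,j))"
proof -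
  have tc: "tens q as g \<in> carrier_mat (2^length as) (2^length as)" for g by (rule tens_carrier)
  have m: "(tens q as E0m * tens q as K0) $$ (i,j) = tens q as E0m $$ (i,j) * tens q as K0 $$ (j,j)"
    by (rule mult_diag_right[OF tc tc diag_K(1) i j])
  have dr: "dim_row (tens q as g) = 2^length as" "dim_col (tens q as g) = 2^length as" for g
    using tens_dims by blast+
  show ?thesis unfolding opAs_def using i j m dr by simp
qed

lemma opA_carrier: "opA q as a b c u v \<in> carrier_mat (2^length as) (2^length as)"
proof -
  have tc: "tens q as g \<in> carrier_mat (2^length as) (2^length as)" for g by (rule tens_carrier)
  show ?thesis unfolding opA_def using tc by (intro add_carrier_mat smult_carrier_mat mult_carrier_mat one_carrier_mat) auto
qed

lemma opAs_carrier: "opAs q as a b c u v \<in> carrier_mat (2^length as) (2^length as)"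
proof -
  have tc: "tens q as g \<in> carrier_mat (2^length as) (2^length as)" for g by (rule tens_carrier)
  show ?thesis unfolding opAs_def using tc by (intro add_carrier_mat smult_carrier_mat mult_carrier_mat one_carrier_mat) auto
qed

lemma opA_diag: "i < 2^length as \<Longrightarrow> opA q as a b c u v $$ (i,i) = theta a b c q (length as) (pc (length as) i)"
  using tens_K[OF q, of i as i] tens_E[OF q, of i as i] by (simp add: opA_idx theta_def)

lemma opAs_diag: "i < 2^length as \<Longrightarrow> opAs q as a b c u v $$ (i,i) = theta a b c q (length as) (pc (length as) i)"
  using tens_K[OF q, of i as i] tens_E[OF q, of i as i] by (simp add: opAs_idx theta_def)

lemma opA_pat: "i < 2^length as \<Longrightarrow> j < 2^length as \<Longrightarrow> opA q as a b c u v $$ (i,j) \<noteq> 0 \<Longrightarrow> i \<noteq> j \<Longrightarrow>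
   j < i \<and> pc (length as) j < pc (length as) i"
  using tens_K[OF q, of i as j] tens_E[OF q, of i as j] by (auto simp: opA_idx)

lemma opAs_pat: "i < 2^length as \<Longrightarrow> j < 2^length as \<Longrightarrow> opAs q as a b c u v $$ (i,j) \<noteq> 0 \<Longrightarrow> i \<noteq> j \<Longrightarrow>
   i < j \<and> pc (length as) i < pc (length as) j"
  using tens_K[OF q, of i as j] tens_E[OF q, of i as j] by (auto simp: opAs_idx)

end


lemma conv_ev:
  fixes f :: "nat \<Rightarrow> 'a"
  shows "(\<exists>i<2^d. f (pc d i) = ev) \<longleftrightarrow> (\<exists>k\<le>d. ev = f k)"
proof
  assume "\<exists>i<2^d. f (pc d i) = ev"
  then obtain i where "i < 2^d" "f (pc d i) = ev" by blast
  thus "\<exists>k\<le>d. ev = f k" using pc_le by (intro exI[of _ "pc d i"]) auto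
next
  assume "\<exists>k\<le>d. ev = f k"
  then obtain k where k: "k \<le> d" "ev = f k" by blast
  have "card {i. i < 2^d \<and> pc d i = k} \<noteq> 0" unfolding card_pc using k by simp
  then obtain i where "i < 2^d" "pc d i = k" by (metis (mono_tags, lifting) Collect_empty_eq card.empty)
  thus "\<exists>i<2^d. f (pc d i) = ev" using k by blast
qed

lemma conv_card:
  fixes f :: "nat \<Rightarrow> 'a"
  assumes "inj_on f {0..d}" "k \<le> d"
  shows "card {i. i < 2^d \<and> f (pc d i) = f k} = d choose k"
proof -
  have "{i. i < 2^d \<and> f (pc d i) = f k} = {i. i < 2^d \<and> pc d i = k}"
    using assms pc_le[of _ d] by (auto dest: inj_onD)
  thus ?thesis using card_pc by simp
qed

theorem lemma9p4:
  fixes q a b c as' bs cs u v us vs :: "'a :: field"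
    and alphas :: "'a list" and d :: nat
  assumes "alg_closed_field TYPE('a)"
    and "d = length alphas"
    and "q \<noteq> 0" "b \<noteq> 0" "c \<noteq> 0" "bs \<noteq> 0" "cs \<noteq> 0"
    and "q ^ 2 \<noteq> 1" "q ^ 2 \<noteq> -1"
    and "inj_on (theta a b c q d) {0..d}"
    and "inj_on (theta as' bs cs q d) {0..d}"
    and "\<forall>\<alpha> \<in> set alphas. \<alpha> \<noteq> 0"
    and "u * vs = - b * bs * inverse q * (q - inverse q) ^ 2"
    and "v * us = - c * cs * inverse q * (q - inverse q) ^ 2"
  shows "(\<exists>D. diagonal_mat D \<and> similar_mat (opA q alphas a b c u v) D)
       \<and> (\<forall>ev. eigenvalue (opA q alphas a b c u v) ev \<longleftrightarrow> (\<exists>i\<le>d. ev = theta a b c q d i))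
       \<and> (\<forall>i\<le>d. kernel_dim (char_matrix (opA q alphas a b c u v) (theta a b c q d i)) = d choose i)
       \<and> (\<exists>D. diagonal_mat D \<and> similar_mat (opAs q alphas as' bs cs us vs) D)
       \<and> (\<forall>ev. eigenvalue (opAs q alphas as' bs cs us vs) ev \<longleftrightarrow> (\<exists>i\<le>d. ev = theta as' bs cs q d i))
       \<and> (\<forall>i\<le>d. kernel_dim (char_matrix (opAs q alphas as' bs cs us vs) (theta as' bs cs q d i)) = d choose i)"
proof -
  note q = assms(3) and injA = assms(10) and injS = assms(11)
  have dl: "length alphas = d" using assms(2) by simp
  let ?A = "opA q alphas a b c u v"
  let ?S = "opAs q alphas as' bs cs us vs"
  have RA: "(\<exists>D. diagonal_mat D \<and> similar_mat ?A D) \<and> (\<forall>ev. eigenvalue ?A ev \<longleftrightarrow> (\<exists>i<2^d. theta a b c q d (pc d i) = ev))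
   \<and> (\<forall>ev. kernel_dim (char_matrix ?A ev) = card {i. i < 2^d \<and> theta a b c q d (pc d i) = ev})"
  proof (rule main_lower)
    show "?A \<in> carrier_mat (2^d) (2^d)" using opA_carrier[OF q, of alphas] unfolding dl .
    show "\<And>i. i < 2^d \<Longrightarrow> pc d i \<le> d" by (rule pc_le)
    show "inj_on (theta a b c q d) {0..d}" by (rule injA)
    show "\<And>i. i < 2^d \<Longrightarrow> ?A $$ (i,i) = theta a b c q d (pc d i)" using opA_diag[OF q, of _ alphas] unfolding dl .
    show "\<And>i j. i < 2^d \<Longrightarrow> j < 2^d \<Longrightarrow> ?A $$ (i,j) \<noteq> 0 \<Longrightarrow> i \<noteq> j \<Longrightarrow> j < i \<and> pc d j < pc d i"
      using opA_pat[OF q, of _ alphas] unfolding dl .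
  qed
  interpret W: wtri ?S "2^d" d "\<lambda>i. d - pc d i" "\<lambda>k. theta as' bs cs q d (d - k)"
  proof
    show S: "?S \<in> carrier_mat (2^d) (2^d)" using opAs_carrier[OF q, of alphas] unfolding dl .
    show "upper_triangular ?S"
    proof (rule upper_triangularI)
      fix i j assume ji: "j < i" and i: "i < dim_row ?S"
      hence "i < 2^d" "j < 2^d" using S by auto
      have "?S $$ (i,j) \<noteq> 0 \<Longrightarrow> i \<noteq> j \<Longrightarrow> i < j \<and> pc d i < pc d j"
        using opAs_pat[OF q, of i alphas j] unfolding dl using \<open>i < 2^d\<close> \<open>j < 2^d\<close> by blast
      thus "?S $$ (i,j) = 0" using ji by fastforce
    qed
    show "\<And>i. i < 2^d \<Longrightarrow> d - pc d i \<le> d" by simp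
    show "inj_on (\<lambda>k. theta as' bs cs q d (d - k)) {0..d}"
    proof (rule inj_onI)
      fix x y assume xy: "x \<in> {0..d}" "y \<in> {0..d}" "theta as' bs cs q d (d - x) = theta as' bs cs q d (d - y)"
      hence "d - x = d - y" using injS by (auto dest: inj_onD)
      thus "x = y" using xy by auto
    qed
    show "\<And>i. i < 2^d \<Longrightarrow> ?S $$ (i,i) = theta as' bs cs q d (d - (d - pc d i))"
    proof -
      fix i :: nat assume i: "i < 2^d"
      have "?S $$ (i,i) = theta as' bs cs q d (pc d i)" using opAs_diag[OF q, of i alphas] i unfolding dl by blast
      moreover have "pc d i \<le> d" using pc_le i by blast
      ultimately show "?S $$ (i,i) = theta as' bs cs q d (d - (d - pc d i))" by simp
    qed
    show "\<And>i j. i < 2^d \<Longrightarrow> j < 2^d \<Longrightarrow> ?S $$ (i,j) \<noteq> 0 \<Longrightarrow> i \<noteq> j \<Longrightarrow> d - pc d j < d - pc d i"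
    proof -
      fix i j :: nat assume h: "i < 2^d" "j < 2^d" "?S $$ (i,j) \<noteq> 0" "i \<noteq> j"
      hence "pc d i < pc d j" using opAs_pat[OF q, of i alphas j] unfolding dl by blast
      moreover have "pc d j \<le> d" using pc_le h(2) by simp
      ultimately show "d - pc d j < d - pc d i" by simp
    qed
  qed
  note RS0 = W.main
  have eqS: "i < 2^d \<Longrightarrow> theta as' bs cs q d (d - (d - pc d i)) = theta as' bs cs q d (pc d i)" for i
    using pc_le[of i d] by simp
  have RS: "(\<exists>D. diagonal_mat D \<and> similar_mat ?S D) \<and> (\<forall>ev. eigenvalue ?S ev \<longleftrightarrow> (\<exists>i<2^d. theta as' bs cs q d (pc d i) = ev))
   \<and> (\<forall>ev. kernel_dim (char_matrix ?S ev) = card {i. i < 2^d \<and> theta as' bs cs q d (pc d i) = ev})"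
  proof -
    have e1: "(\<exists>i<2^d. theta as' bs cs q d (d - (d - pc d i)) = ev) \<longleftrightarrow> (\<exists>i<2^d. theta as' bs cs q d (pc d i) = ev)" for ev
      using eqS by auto
    have e2: "{i. i < 2^d \<and> theta as' bs cs q d (d - (d - pc d i)) = ev} = {i. i < 2^d \<and> theta as' bs cs q d (pc d i) = ev}" for ev
      using eqS by auto
    show ?thesis using RS0 e1 e2 by simp
  qed
  show ?thesis
    using RA RS conv_ev[of d "theta a b c q d"] conv_ev[of d "theta as' bs cs q d"]
      conv_card[OF injA] conv_card[OF injS] by simp
qed


end
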